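(* Let $(X,Y)$ be a bivariate normal random vector in $\mathbb R^2$ with $\mathrm{Var}(X)>0$, $\mathrm{Var}(Y)>0$ and Pearson correlation $\varrho$. Using the metric $\delta(x,y)=|x-y|$ on $\mathbb R$ and the Manhattan metric on pairs, \[ \mathrm{eCor}(X,Y)\le\Big[1-\sqrt{1-\varrho^2}\,\Big]^{1/2}\le|\varrho|, \] and the last inequality is strict unless $\varrho\in\{-1,0,1\}$.
   Context: For probability measures $\mu,\nu$ on a metric space $(S,\rho)$ with finite first moments, $e(\mu,\nu)=\inf_\gamma\int\rho\,d\gamma$ over all couplings $\gamma$ of $\mu,\nu$ (earth mover's / Wasserstein-1 distance). For real random variables $X,Y$, pairs are given the Manhattan metric $d[(x,y),(u,v)]=|x-u|+|y-v|$. The earth mover's covariance is $\mathrm{eCov}(X,Y)=e\big[(X,Y),(X',Y')\big]$, the distance (w.r.t. $d$) between the joint law of $(X,Y)$ and the product of its marginals (law of $(X',Y')$ with $X'\overset d=X$, $Y'\overset d=Y$, $X',Y'$ independent). The earth mover's variance is $\mathrm{eVar}(X)=\mathrm{eCov}(X,X)$, and the earth mover's correlation is $\mathrm{eCor}(X,Y)=\mathrm{eCov}(X,Y)/\min\{\mathrm{eVar}(X),\mathrm{eVar}(Y)\}$, defined when the denominator is positive. *)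

theory Defs
  imports "HOL-Probability.Probability"
begin

definition couplings :: "'a::topological_space measure \<Rightarrow> 'a measure \<Rightarrow> ('a \<times> 'a) measure set" where
  "couplings \<mu> \<nu> = {\<gamma>. prob_space \<gamma> \<and> sets \<gamma> = sets (borel :: ('a \<times> 'a) measure)
      \<and> distr \<gamma> borel fst = \<mu> \<and> distr \<gamma> borel snd = \<nu>}"

definition emd :: "('a::topological_space \<Rightarrow> 'a \<Rightarrow> real) \<Rightarrow> 'a measure \<Rightarrow> 'a measure \<Rightarrow> ennreal" where
  "emd d \<mu> \<nu> = (INF \<gamma> \<in> couplings \<mu> \<nu>. \<integral>\<^sup>+ z. ennreal (d (fst z) (snd z)) \<partial>\<gamma>)"

definition manhattan :: "real \<times> real \<Rightarrow> real \<times> real \<Rightarrow> real" where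
  "manhattan p q = \<bar>fst p - fst q\<bar> + \<bar>snd p - snd q\<bar>"

definition eCov :: "'w measure \<Rightarrow> ('w \<Rightarrow> real) \<Rightarrow> ('w \<Rightarrow> real) \<Rightarrow> ennreal" where
  "eCov M X Y = emd manhattan (distr M borel (\<lambda>\<omega>. (X \<omega>, Y \<omega>)))
                              (distr M borel X \<Otimes>\<^sub>M distr M borel Y)"

definition eVar :: "'w measure \<Rightarrow> ('w \<Rightarrow> real) \<Rightarrow> ennreal" where
  "eVar M X = eCov M X X"

definition eCor :: "'w measure \<Rightarrow> ('w \<Rightarrow> real) \<Rightarrow> ('w \<Rightarrow> real) \<Rightarrow> real" where
  "eCor M X Y = enn2real (eCov M X Y) / min (enn2real (eVar M X)) (enn2real (eVar M Y))"

definition gaussian_rv :: "'w measure \<Rightarrow> ('w \<Rightarrow> real) \<Rightarrow> bool" where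
  "gaussian_rv M Z \<longleftrightarrow> Z \<in> borel_measurable M \<and>
     ((\<exists>c. AE \<omega> in M. Z \<omega> = c) \<or> (\<exists>m \<sigma>. \<sigma> > 0 \<and> distributed M lborel Z (normal_density m \<sigma>)))"

definition bivariate_normal :: "'w measure \<Rightarrow> ('w \<Rightarrow> real) \<Rightarrow> ('w \<Rightarrow> real) \<Rightarrow> bool" where
  "bivariate_normal M X Y \<longleftrightarrow> (\<forall>a b. gaussian_rv M (\<lambda>\<omega>. a * X \<omega> + b * Y \<omega>))"

definition covariance :: "'w measure \<Rightarrow> ('w \<Rightarrow> real) \<Rightarrow> ('w \<Rightarrow> real) \<Rightarrow> real" where
  "covariance M X Y = (\<integral>\<omega>. (X \<omega> - (\<integral>\<omega>. X \<omega> \<partial>M)) * (Y \<omega> - (\<integral>\<omega>. Y \<omega> \<partial>M)) \<partial>M)"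

definition pearson :: "'w measure \<Rightarrow> ('w \<Rightarrow> real) \<Rightarrow> ('w \<Rightarrow> real) \<Rightarrow> real" where
  "pearson M X Y = covariance M X Y / sqrt (covariance M X X * covariance M Y Y)"

end

theory Submission
  imports Defs
begin

lemma gauss_normal:
  assumes P: "prob_space M" and D: "distributed M lborel Z (normal_density m \<sigma>)" and s: "\<sigma> > 0"
  shows "integrable M Z" "integrable M (\<lambda>w. (Z w)\<^sup>2)"
    and "(\<integral>w. Z w \<partial>M) = m" "covariance M Z Z = \<sigma>\<^sup>2"
    and "\<And>t. (CLINT w|M. iexp (t * Z w)) = iexp (t * m) * complex_of_real (exp (- (t\<^sup>2 * \<sigma>\<^sup>2) / 2))"
    and "(\<integral>\<^sup>+ w. ennreal \<bar>Z w - m\<bar> \<partial>M) = ennreal (\<sigma> * sqrt (2/pi))"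
proof -
  interpret prob_space M by fact
  have Zm[measurable]: "Z \<in> borel_measurable M"
    using distributed_measurable[OF D] by simp
  show iZ: "integrable M Z"
    using distributed_integrable[OF D, of "\<lambda>x. x"] integrable_normal_moment_nz_1[of \<sigma> m] s by simp
  have "integrable M (\<lambda>w. (Z w - m)^2)"
    using distributed_integrable[OF D, of "\<lambda>x. (x - m)^2"] integrable_normal_moment[of \<sigma> m 2] s by simp
  moreover have "(\<lambda>w. (Z w)\<^sup>2) = (\<lambda>w. (Z w - m)^2 + 2 * m * Z w - m^2)"
    by (auto simp: power2_eq_square algebra_simps)
  ultimately show "integrable M (\<lambda>w. (Z w)\<^sup>2)" using iZ by simp
  show E: "(\<integral>w. Z w \<partial>M) = m" using normal_distributed_expectation[OF s D] .
  show "covariance M Z Z = \<sigma>\<^sup>2"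
    using normal_distributed_variance[OF s D] E unfolding covariance_def by (simp add: power2_eq_square)
  have "has_bochner_integral lborel (\<lambda>x. normal_density m \<sigma> x * \<bar>x - m\<bar>^(2 * 0 + 1)) (2^0 * \<sigma>^(2 * 0 + 1) * fact 0 * sqrt (2 / pi))"
    by (rule normal_moment_abs_odd) (rule s)
  then have hb: "has_bochner_integral lborel (\<lambda>x. normal_density m \<sigma> x * \<bar>x - m\<bar>) (\<sigma> * sqrt (2 / pi))" by simp
  have "(\<integral>\<^sup>+ x. ennreal (normal_density m \<sigma> x * \<bar>x - m\<bar>) \<partial>lborel) = ennreal (\<sigma> * sqrt (2 / pi))"
    using hb by (subst nn_integral_eq_integral) (auto simp: has_bochner_integral_iff)
  moreover have "(\<integral>\<^sup>+ x. ennreal (normal_density m \<sigma> x) * ennreal \<bar>x - m\<bar> \<partial>lborel) = (\<integral>\<^sup>+ w. ennreal \<bar>Z w - m\<bar> \<partial>M)"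
    by (rule distributed_nn_integral[OF D]) simp
  ultimately show "(\<integral>\<^sup>+ w. ennreal \<bar>Z w - m\<bar> \<partial>M) = ennreal (\<sigma> * sqrt (2/pi))"
    by (simp add: ennreal_mult'[symmetric])
  fix t :: real
  have "distributed M lborel (\<lambda>x. (Z x - m) / \<sigma>) std_normal_density"
    using normal_standard_normal_convert[OF s] D by simp
  then have SD: "distr M lborel (\<lambda>x. (Z x - m) / \<sigma>) = std_normal_distribution"
    by (simp add: distributed_distr_eq_density)
  have "(CLINT w|M. iexp (t * (Z w - m))) = (CLINT w|M. iexp (t * \<sigma> * ((Z w - m) / \<sigma>)))"
    using s by simp
  also have "\<dots> = char std_normal_distribution (t * \<sigma>)"
    unfolding char_def SD[symmetric] by (subst integral_distr) auto
  also have "\<dots> = complex_of_real (exp (- ((t * \<sigma>)^2) / 2))"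
    by (simp add: char_std_normal_distribution)
  finally have C: "(CLINT w|M. iexp (t * (Z w - m))) = complex_of_real (exp (- ((t * \<sigma>)^2) / 2))" .
  have "(CLINT w|M. iexp (t * Z w)) = (CLINT w|M. iexp (t * m) * iexp (t * (Z w - m)))"
    by (intro Bochner_Integration.integral_cong) (auto simp: algebra_simps simp flip: exp_add)
  also have "\<dots> = iexp (t * m) * (CLINT w|M. iexp (t * (Z w - m)))"
    by (rule integral_mult_right_zero)
  finally show "(CLINT w|M. iexp (t * Z w)) = iexp (t * m) * complex_of_real (exp (- (t\<^sup>2 * \<sigma>\<^sup>2) / 2))"
    using C by (simp add: power_mult_distrib)
qed

lemma gauss_rv:
  assumes P: "prob_space M" and G: "gaussian_rv M Z"
  shows "integrable M Z" "integrable M (\<lambda>w. (Z w)\<^sup>2)"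
    and "\<And>t. (CLINT w|M. iexp (t * Z w)) = iexp (t * (\<integral>w. Z w \<partial>M)) * complex_of_real (exp (- (t\<^sup>2 * covariance M Z Z) / 2))"
    and "(\<integral>\<^sup>+ w. ennreal \<bar>Z w - (\<integral>w. Z w \<partial>M)\<bar> \<partial>M) = ennreal (sqrt (covariance M Z Z) * sqrt (2/pi))"
    and "covariance M Z Z > 0 \<Longrightarrow> distributed M lborel Z (normal_density (\<integral>w. Z w \<partial>M) (sqrt (covariance M Z Z)))"
    and "covariance M Z Z \<ge> 0"
proof -
  interpret prob_space M by fact
  have Zm[measurable]: "Z \<in> borel_measurable M" using G unfolding gaussian_rv_def by blast
  have "(\<exists>c. AE \<omega> in M. Z \<omega> = c) \<or> (\<exists>m \<sigma>. \<sigma> > 0 \<and> distributed M lborel Z (normal_density m \<sigma>))"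
    using G unfolding gaussian_rv_def by blast
  then have "integrable M Z \<and> integrable M (\<lambda>w. (Z w)\<^sup>2) \<and>
    (\<forall>t. (CLINT w|M. iexp (t * Z w)) = iexp (t * (\<integral>w. Z w \<partial>M)) * complex_of_real (exp (- (t\<^sup>2 * covariance M Z Z) / 2))) \<and>
    (\<integral>\<^sup>+ w. ennreal \<bar>Z w - (\<integral>w. Z w \<partial>M)\<bar> \<partial>M) = ennreal (sqrt (covariance M Z Z) * sqrt (2/pi)) \<and>
    (covariance M Z Z > 0 \<longrightarrow> distributed M lborel Z (normal_density (\<integral>w. Z w \<partial>M) (sqrt (covariance M Z Z)))) \<and>
    covariance M Z Z \<ge> 0"
  proof
    assume "\<exists>c. AE \<omega> in M. Z \<omega> = c"
    then obtain c where c: "AE \<omega> in M. Z \<omega> = c" by blast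
    have i1: "integrable M Z"
      using integrable_cong_AE[of Z M "\<lambda>_. c"] c by simp
    have i2: "integrable M (\<lambda>w. (Z w)\<^sup>2)"
    proof -
      have "AE w in M. (Z w)\<^sup>2 = c\<^sup>2" using c by eventually_elim simp
      then show ?thesis using integrable_cong_AE[of "\<lambda>w. (Z w)\<^sup>2" M "\<lambda>_. c\<^sup>2"] by simp
    qed
    have E: "(\<integral>w. Z w \<partial>M) = c"
      using integral_cong_AE[of Z M "\<lambda>_. c"] c by (simp add: prob_space)
    have V: "covariance M Z Z = 0"
      unfolding covariance_def E
      using integral_cong_AE[of "\<lambda>w. (Z w - c) * (Z w - c)" M "\<lambda>_. 0"] c by simp
    have CH: "(CLINT w|M. iexp (t * Z w)) = iexp (t * c)" for t
    proof -
      have "AE w in M. iexp (t * Z w) = iexp (t * c)" using c by eventually_elim simp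
      then show ?thesis using integral_cong_AE[of "\<lambda>w. iexp (t * Z w)" M "\<lambda>_. iexp (t * c)"] by (simp add: prob_space)
    qed
    have N: "(\<integral>\<^sup>+ w. ennreal \<bar>Z w - c\<bar> \<partial>M) = 0"
      using c by (subst nn_integral_cong_AE[where v="\<lambda>_. 0"]) auto
    show ?thesis using i1 i2 E V CH N by simp
  next
    assume "\<exists>m \<sigma>. \<sigma> > 0 \<and> distributed M lborel Z (normal_density m \<sigma>)"
    then obtain m \<sigma> where s: "\<sigma> > 0" and D: "distributed M lborel Z (normal_density m \<sigma>)" by blast
    note g = gauss_normal[OF P D s]
    have sq: "sqrt (\<sigma>\<^sup>2) = \<sigma>" using s by simp
    show ?thesis using g s sq D by simp
  qed
  then show "integrable M Z" "integrable M (\<lambda>w. (Z w)\<^sup>2)"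
    and "\<And>t. (CLINT w|M. iexp (t * Z w)) = iexp (t * (\<integral>w. Z w \<partial>M)) * complex_of_real (exp (- (t\<^sup>2 * covariance M Z Z) / 2))"
    and "(\<integral>\<^sup>+ w. ennreal \<bar>Z w - (\<integral>w. Z w \<partial>M)\<bar> \<partial>M) = ennreal (sqrt (covariance M Z Z) * sqrt (2/pi))"
    and "covariance M Z Z > 0 \<Longrightarrow> distributed M lborel Z (normal_density (\<integral>w. Z w \<partial>M) (sqrt (covariance M Z Z)))"
    and "covariance M Z Z \<ge> 0" by blast+
qed

lemma gauss_shift:
  assumes P: "prob_space M" and G: "gaussian_rv M Z"
  shows "gaussian_rv M (\<lambda>w. Z w + d)"
proof -
  interpret prob_space M by fact
  have Zm[measurable]: "Z \<in> borel_measurable M" using G unfolding gaussian_rv_def by blast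
  have "(\<exists>c. AE \<omega> in M. Z \<omega> = c) \<or> (\<exists>m \<sigma>. \<sigma> > 0 \<and> distributed M lborel Z (normal_density m \<sigma>))"
    using G unfolding gaussian_rv_def by blast
  then have "(\<exists>c. AE \<omega> in M. Z \<omega> + d = c) \<or> (\<exists>m \<sigma>. \<sigma> > 0 \<and> distributed M lborel (\<lambda>w. Z w + d) (normal_density m \<sigma>))"
  proof
    assume "\<exists>c. AE \<omega> in M. Z \<omega> = c"
    then obtain c where c: "AE \<omega> in M. Z \<omega> = c" by blast
    then have "AE \<omega> in M. Z \<omega> + d = c + d" by eventually_elim simp
    then show ?thesis by blast
  next
    assume "\<exists>m \<sigma>. \<sigma> > 0 \<and> distributed M lborel Z (normal_density m \<sigma>)"
    then obtain m \<sigma> where s: "\<sigma> > 0" and D: "distributed M lborel Z (normal_density m \<sigma>)" by blast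
    have "distributed M lborel (\<lambda>x. d + 1 * Z x) (normal_density (d + 1 * m) (\<bar>1\<bar> * \<sigma>))"
      by (rule normal_density_affine[OF D s]) simp
    then have "distributed M lborel (\<lambda>x. Z x + d) (normal_density (d + m) \<sigma>)"
      by (simp add: add.commute)
    then show ?thesis using s by blast
  qed
  then show ?thesis unfolding gaussian_rv_def by simp
qed

lemma cov_lin:
  assumes P: "prob_space M" and iX: "integrable M X" and iY: "integrable M Y"
    and iX2: "integrable M (\<lambda>w. (X w)\<^sup>2)" and iY2: "integrable M (\<lambda>w. (Y w)\<^sup>2)"
  shows "(\<integral>w. a * X w + b * Y w + d \<partial>M) = a * (\<integral>w. X w \<partial>M) + b * (\<integral>w. Y w \<partial>M) + d"
    and "covariance M (\<lambda>w. a * X w + b * Y w + d) (\<lambda>w. a * X w + b * Y w + d) =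
          a\<^sup>2 * covariance M X X + 2 * a * b * covariance M X Y + b\<^sup>2 * covariance M Y Y"
proof -
  interpret prob_space M by fact
  have [measurable]: "X \<in> borel_measurable M" "Y \<in> borel_measurable M"
    using iX iY by (auto simp: borel_measurable_integrable)
  define mX where "mX = (\<integral>w. X w \<partial>M)"
  define mY where "mY = (\<integral>w. Y w \<partial>M)"
  show E: "(\<integral>w. a * X w + b * Y w + d \<partial>M) = a * (\<integral>w. X w \<partial>M) + b * (\<integral>w. Y w \<partial>M) + d"
    using iX iY by (simp add: prob_space)
  have i1: "integrable M (\<lambda>w. (X w - mX) * (X w - mX))"
  proof -
    have "(\<lambda>w. (X w - mX) * (X w - mX)) = (\<lambda>w. (X w)\<^sup>2 - 2 * mX * X w + mX\<^sup>2)"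
      by (auto simp: power2_eq_square algebra_simps)
    then show ?thesis using iX iX2 by simp
  qed
  have i2: "integrable M (\<lambda>w. (Y w - mY) * (Y w - mY))"
  proof -
    have "(\<lambda>w. (Y w - mY) * (Y w - mY)) = (\<lambda>w. (Y w)\<^sup>2 - 2 * mY * Y w + mY\<^sup>2)"
      by (auto simp: power2_eq_square algebra_simps)
    then show ?thesis using iY iY2 by simp
  qed
  have i3: "integrable M (\<lambda>w. (X w - mX) * (Y w - mY))"
  proof (rule Bochner_Integration.integrable_bound)
    show "integrable M (\<lambda>w. (X w - mX) * (X w - mX) + (Y w - mY) * (Y w - mY))"
      using i1 i2 by simp
    show "(\<lambda>w. (X w - mX) * (Y w - mY)) \<in> borel_measurable M" by measurable
    show "AE w in M. norm ((X w - mX) * (Y w - mY)) \<le> norm ((X w - mX) * (X w - mX) + (Y w - mY) * (Y w - mY))"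
    proof (rule AE_I2)
      fix w
      have "2 * \<bar>(X w - mX) * (Y w - mY)\<bar> \<le> (X w - mX) * (X w - mX) + (Y w - mY) * (Y w - mY)"
      proof -
        have "2 * \<bar>X w - mX\<bar> * \<bar>Y w - mY\<bar> \<le> \<bar>X w - mX\<bar>\<^sup>2 + \<bar>Y w - mY\<bar>\<^sup>2"
          by (rule sum_squares_bound)
        then show ?thesis by (simp add: abs_mult power2_eq_square mult.assoc)
      qed
      then show "norm ((X w - mX) * (Y w - mY)) \<le> norm ((X w - mX) * (X w - mX) + (Y w - mY) * (Y w - mY))"
        by simp
    qed
  qed
  have "covariance M (\<lambda>w. a * X w + b * Y w + d) (\<lambda>w. a * X w + b * Y w + d) =
    (\<integral>w. a\<^sup>2 * ((X w - mX) * (X w - mX)) + 2 * a * b * ((X w - mX) * (Y w - mY)) + b\<^sup>2 * ((Y w - mY) * (Y w - mY)) \<partial>M)"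
    unfolding covariance_def E mX_def[symmetric] mY_def[symmetric]
    by (intro Bochner_Integration.integral_cong) (auto simp: power2_eq_square algebra_simps)
  also have "\<dots> = a\<^sup>2 * covariance M X X + 2 * a * b * covariance M X Y + b\<^sup>2 * covariance M Y Y"
    unfolding covariance_def mX_def[symmetric] mY_def[symmetric] using i1 i2 i3 by simp
  finally show "covariance M (\<lambda>w. a * X w + b * Y w + d) (\<lambda>w. a * X w + b * Y w + d) =
          a\<^sup>2 * covariance M X X + 2 * a * b * covariance M X Y + b\<^sup>2 * covariance M Y Y" .
qed

lemma levy_trick:
  fixes R h :: "'w \<Rightarrow> real"
  assumes P: "prob_space M" and Rm[measurable]: "R \<in> borel_measurable M" and hm[measurable]: "h \<in> borel_measurable M"
    and hb: "\<And>w. \<bar>h w\<bar> \<le> 1"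
    and H: "\<And>t. (CLINT w|M. iexp (t * R w) * complex_of_real (h w)) = (CLINT w|M. iexp (t * R w)) * complex_of_real (\<integral>w. h w \<partial>M)"
    and B[measurable]: "B \<in> sets borel"
  shows "(\<integral>w. indicator B (R w) * h w \<partial>M) = (\<integral>w. indicator B (R w) \<partial>M) * (\<integral>w. h w \<partial>M)"
proof -
  interpret prob_space M by fact
  have ih: "integrable M h" by (rule integrable_const_bound[where B=1]) (auto simp: hb)
  have iI: "integrable M (\<lambda>w. indicator B (R w) :: real)"
    by (rule integrable_const_bound[where B=1]) (auto simp: indicator_def)
  have iIh: "integrable M (\<lambda>w. indicator B (R w) * h w :: real)"
    by (rule integrable_const_bound[where B=1]) (auto simp: indicator_def hb abs_mult)
  define g where "g w = 1 + h w" for w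
  have g0: "0 \<le> g w" for w using hb[of w] by (auto simp: g_def)
  have gm[measurable]: "g \<in> borel_measurable M" unfolding g_def by measurable
  have ig: "integrable M g" unfolding g_def using ih by simp
  have Eg: "(\<integral>w. g w \<partial>M) = 1 + (\<integral>w. h w \<partial>M)" unfolding g_def using ih by (simp add: prob_space)
  show ?thesis
  proof (cases "(\<integral>w. g w \<partial>M) = 0")
    case True
    then have "AE w in M. g w = 0" using integral_nonneg_eq_0_iff_AE[OF ig] g0 by auto
    then have AEh: "AE w in M. h w = -1" by eventually_elim (simp add: g_def)
    then have Eh: "(\<integral>w. h w \<partial>M) = -1"
      using integral_cong_AE[of h M "\<lambda>_. -1"] by (simp add: prob_space)
    have "AE w in M. indicator B (R w) * h w = - (indicator B (R w) :: real)"
      using AEh by eventually_elim simp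
    then have "(\<integral>w. indicator B (R w) * h w \<partial>M) = (\<integral>w. - (indicator B (R w) :: real) \<partial>M)"
      by (intro integral_cong_AE) auto
    then show ?thesis using Eh by simp
  next
    case False
    define c where "c = (\<integral>w. g w \<partial>M)"
    have "0 \<le> c" unfolding c_def by (rule integral_nonneg_AE) (simp add: g0)
    then have cp: "c > 0" using False unfolding c_def by simp
    define Q where "Q = density M (\<lambda>w. ennreal (g w / c))"
    have "(\<integral>\<^sup>+ w. ennreal (g w / c) \<partial>M) = ennreal (\<integral>w. g w / c \<partial>M)"
      using ig g0 cp by (intro nn_integral_eq_integral) simp_all
    also have "(\<integral>w. g w / c \<partial>M) = 1" using cp unfolding c_def by simp
    finally have nn1: "(\<integral>\<^sup>+ w. ennreal (g w / c) \<partial>M) = 1" by simp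
    have PQ: "prob_space Q"
    proof
      show "emeasure Q (space Q) = 1"
      proof -
        have "emeasure Q (space Q) = (\<integral>\<^sup>+ w. ennreal (g w / c) * indicator (space M) w \<partial>M)"
          unfolding Q_def space_density by (rule emeasure_density) simp_all
        also have "\<dots> = (\<integral>\<^sup>+ w. ennreal (g w / c) \<partial>M)"
          by (rule nn_integral_cong) simp
        finally show ?thesis using nn1 by simp
      qed
    qed
    interpret Q: prob_space Q by (rule PQ)
    have sQ[measurable_cong]: "sets Q = sets M" unfolding Q_def by simp
    have RQ[measurable]: "R \<in> borel_measurable Q" using Rm by (simp add: measurable_cong_sets[OF sQ refl])
    have RD1: "real_distribution (distr M borel R)" by simp
    have RD2: "real_distribution (distr Q borel R)" using RQ by (rule Q.real_distribution_distr)
    have iexpI: "integrable M (\<lambda>w. iexp (t * R w))" for t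
      by (rule integrable_const_bound[where B=1]) (auto simp: norm_exp_i_times)
    have iexpIh: "integrable M (\<lambda>w. iexp (t * R w) * complex_of_real (h w))" for t
      by (rule integrable_const_bound[where B=1]) (auto simp: norm_mult norm_exp_i_times hb)
    have "char (distr Q borel R) t = char (distr M borel R) t" for t
    proof -
      have "char (distr Q borel R) t = (CLINT w|Q. iexp (t * R w))"
        unfolding char_def by (subst integral_distr) auto
      also have "\<dots> = (CLINT w|M. (g w / c) *\<^sub>R iexp (t * R w))"
        unfolding Q_def using g0 cp by (subst integral_density) auto
      also have "\<dots> = (CLINT w|M. complex_of_real (1 / c) * (iexp (t * R w) + iexp (t * R w) * complex_of_real (h w)))"
        by (intro Bochner_Integration.integral_cong) (auto simp: g_def scaleR_conv_of_real field_simps)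
      also have "\<dots> = complex_of_real (1 / c) * ((CLINT w|M. iexp (t * R w)) + (CLINT w|M. iexp (t * R w) * complex_of_real (h w)))"
        using iexpI iexpIh by simp
      also have "\<dots> = (CLINT w|M. iexp (t * R w)) * (complex_of_real (1 / c) * (1 + complex_of_real (\<integral>w. h w \<partial>M)))"
        unfolding H by (simp add: algebra_simps)
      also have "complex_of_real (1 / c) * (1 + complex_of_real (\<integral>w. h w \<partial>M)) = 1"
      proof -
        have "(1 / c) * (1 + (\<integral>w. h w \<partial>M)) = 1" using cp unfolding c_def Eg by simp
        then have "complex_of_real ((1 / c) * (1 + (\<integral>w. h w \<partial>M))) = 1" by simp
        then show ?thesis by simp
      qed
      also have "(CLINT w|M. iexp (t * R w)) = char (distr M borel R) t"
        unfolding char_def by (subst integral_distr) auto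
      finally show ?thesis by simp
    qed
    then have EQ: "distr Q borel R = distr M borel R"
      by (intro Levy_uniqueness RD2 RD1) auto
    have "(\<integral>w. indicator B (R w) \<partial>M) = (\<integral>x. indicator B x \<partial>distr M borel R :: real)"
      by (rule integral_distr[symmetric]) auto
    also have "\<dots> = (\<integral>x. indicator B x \<partial>distr Q borel R)" by (simp add: EQ)
    also have "\<dots> = (\<integral>w. indicator B (R w) \<partial>Q)"
      by (rule integral_distr) auto
    also have "\<dots> = (\<integral>w. (g w / c) *\<^sub>R indicator B (R w) \<partial>M)"
      unfolding Q_def using g0 cp by (subst integral_density) auto
    also have "\<dots> = (\<integral>w. (1 / c) * (indicator B (R w) + indicator B (R w) * h w) \<partial>M)"
      by (intro Bochner_Integration.integral_cong) (auto simp: g_def field_simps)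
    also have "\<dots> = (1 / c) * ((\<integral>w. indicator B (R w) \<partial>M) + (\<integral>w. indicator B (R w) * h w \<partial>M))"
      using iI iIh by simp
    finally have "c * (\<integral>w. indicator B (R w) \<partial>M) = (\<integral>w. indicator B (R w) \<partial>M) + (\<integral>w. indicator B (R w) * h w \<partial>M)"
      using cp by (simp add: field_simps)
    then show ?thesis unfolding c_def Eg by (simp add: algebra_simps)
  qed
qed

lemma cos_iexp: "complex_of_real (cos x) = (iexp x + iexp (-x)) / 2"
  by (metis cos_exp_eq cos_of_real more_arith_simps(8) of_real_minus)
lemma sin_iexp: "complex_of_real (sin x) = (iexp x - iexp (-x)) / (2 * \<i>)"
  by (metis complex_i_mult_minus of_real_minus sin_exp_eq sin_of_real)
lemma iexp_cs: "iexp x = complex_of_real (cos x) + \<i> * complex_of_real (sin x)"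
  by (simp add: cos_of_real exp_Euler sin_of_real)

lemma integrable_iexp_bd:
  assumes [measurable]: "f \<in> borel_measurable M" "g \<in> borel_measurable M" and P: "prob_space M"
    and gb: "\<And>w. \<bar>g w\<bar> \<le> (1::real)"
  shows "integrable M (\<lambda>w. iexp (f w) * complex_of_real (g w))"
proof -
  interpret prob_space M by fact
  show ?thesis by (rule integrable_const_bound[where B=1]) (auto simp: norm_mult norm_exp_i_times gb)
qed

lemma integrable_iexp1:
  assumes [measurable]: "f \<in> borel_measurable M" and P: "prob_space M"
  shows "integrable M (\<lambda>w. iexp (f w))"
  using integrable_iexp_bd[OF assms(1) _ P, of "\<lambda>_. 1"] by simp

lemma stepA:
  fixes X R :: "'w \<Rightarrow> real"
  assumes P: "prob_space M" and [measurable]: "X \<in> borel_measurable M" "R \<in> borel_measurable M"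
    and CF: "\<And>s t. (CLINT w|M. iexp (s * X w + t * R w)) = (CLINT w|M. iexp (s * X w)) * (CLINT w|M. iexp (t * R w))"
    and B[measurable]: "B \<in> sets borel"
  shows "(CLINT w|M. iexp (s * X w) * complex_of_real (indicator B (R w))) =
          (CLINT w|M. iexp (s * X w)) * complex_of_real (\<integral>w. indicator B (R w) \<partial>M)"
proof -
  interpret prob_space M by fact
  define u where "u = (CLINT w|M. iexp (s * X w))"
  define v where "v = (CLINT w|M. iexp (- s * X w))"
  define phi where "phi t = (CLINT w|M. iexp (t * R w))" for t
  have I1: "integrable M (\<lambda>w. iexp (f w))" if [measurable]: "f \<in> borel_measurable M" for f
    by (rule integrable_iexp1) (auto simp: P)
  have Ecos: "complex_of_real (\<integral>w. cos (s * X w) \<partial>M) = (u + v) / 2"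
  proof -
    have "complex_of_real (\<integral>w. cos (s * X w) \<partial>M) = (CLINT w|M. complex_of_real (cos (s * X w)))" by simp
    also have "\<dots> = (CLINT w|M. (iexp (s * X w) + iexp (- s * X w)) / 2)"
      by (simp add: cos_iexp)
    also have "\<dots> = (u + v) / 2" unfolding u_def v_def using I1[of "\<lambda>w. s * X w"] I1[of "\<lambda>w. - s * X w"] by simp
    finally show ?thesis .
  qed
  have Esin: "complex_of_real (\<integral>w. sin (s * X w) \<partial>M) = (u - v) / (2 * \<i>)"
  proof -
    have "complex_of_real (\<integral>w. sin (s * X w) \<partial>M) = (CLINT w|M. complex_of_real (sin (s * X w)))" by simp
    also have "\<dots> = (CLINT w|M. (iexp (s * X w) - iexp (- s * X w)) / (2 * \<i>))"
      by (simp add: sin_iexp)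
    also have "\<dots> = (u - v) / (2 * \<i>)" unfolding u_def v_def using I1[of "\<lambda>w. s * X w"] I1[of "\<lambda>w. - s * X w"] by simp
    finally show ?thesis .
  qed
  have split: "iexp (t * R w) * complex_of_real (cos (s * X w)) = (iexp (s * X w + t * R w) + iexp (- s * X w + t * R w)) / 2"
    "iexp (t * R w) * complex_of_real (sin (s * X w)) = (iexp (s * X w + t * R w) - iexp (- s * X w + t * R w)) / (2 * \<i>)" for t w
    by (simp_all add: cos_iexp sin_iexp field_simps flip: exp_add)
  have Hc: "(CLINT w|M. iexp (t * R w) * complex_of_real (cos (s * X w))) = (CLINT w|M. iexp (t * R w)) * complex_of_real (\<integral>w. cos (s * X w) \<partial>M)" for t
  proof -
    have "(CLINT w|M. iexp (t * R w) * complex_of_real (cos (s * X w))) =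
      (CLINT w|M. (iexp (s * X w + t * R w) + iexp (- s * X w + t * R w)) / 2)"
      by (simp only: split)
    also have "\<dots> = ((CLINT w|M. iexp (s * X w + t * R w)) + (CLINT w|M. iexp (- s * X w + t * R w))) / 2"
      using I1[of "\<lambda>w. s * X w + t * R w"] I1[of "\<lambda>w. - s * X w + t * R w"] by simp
    also have "\<dots> = phi t * ((u + v) / 2)"
      unfolding CF u_def v_def phi_def by (simp add: algebra_simps)
    finally show ?thesis unfolding Ecos phi_def .
  qed
  have Hs: "(CLINT w|M. iexp (t * R w) * complex_of_real (sin (s * X w))) = (CLINT w|M. iexp (t * R w)) * complex_of_real (\<integral>w. sin (s * X w) \<partial>M)" for t
  proof -
    have "(CLINT w|M. iexp (t * R w) * complex_of_real (sin (s * X w))) =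
      (CLINT w|M. (iexp (s * X w + t * R w) - iexp (- s * X w + t * R w)) / (2 * \<i>))"
      by (simp only: split)
    also have "\<dots> = ((CLINT w|M. iexp (s * X w + t * R w)) - (CLINT w|M. iexp (- s * X w + t * R w))) / (2 * \<i>)"
      using I1[of "\<lambda>w. s * X w + t * R w"] I1[of "\<lambda>w. - s * X w + t * R w"] by simp
    also have "\<dots> = phi t * ((u - v) / (2 * \<i>))"
      unfolding CF u_def v_def phi_def by (simp add: algebra_simps diff_divide_distrib)
    finally show ?thesis unfolding Esin phi_def .
  qed
  have C: "(\<integral>w. indicator B (R w) * cos (s * X w) \<partial>M) = (\<integral>w. indicator B (R w) \<partial>M) * (\<integral>w. cos (s * X w) \<partial>M)"
    by (rule levy_trick[OF P _ _ _ Hc B]) auto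
  have S: "(\<integral>w. indicator B (R w) * sin (s * X w) \<partial>M) = (\<integral>w. indicator B (R w) \<partial>M) * (\<integral>w. sin (s * X w) \<partial>M)"
    by (rule levy_trick[OF P _ _ _ Hs B]) auto
  have iC: "integrable M (\<lambda>w. indicator B (R w) * cos (s * X w) :: real)"
    by (rule integrable_const_bound[where B=1]) (auto simp: indicator_def)
  have iS: "integrable M (\<lambda>w. indicator B (R w) * sin (s * X w) :: real)"
    by (rule integrable_const_bound[where B=1]) (auto simp: indicator_def)
  have "(CLINT w|M. iexp (s * X w) * complex_of_real (indicator B (R w))) =
    (CLINT w|M. complex_of_real (indicator B (R w) * cos (s * X w)) + \<i> * complex_of_real (indicator B (R w) * sin (s * X w)))"
    by (intro Bochner_Integration.integral_cong refl) (subst iexp_cs, simp add: algebra_simps)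
  also have "\<dots> = (CLINT w|M. complex_of_real (indicator B (R w) * cos (s * X w))) + (CLINT w|M. \<i> * complex_of_real (indicator B (R w) * sin (s * X w)))"
    by (rule Bochner_Integration.integral_add) (auto intro!: integrable_of_real iC iS simp del: of_real_mult)
  also have "\<dots> = complex_of_real (\<integral>w. indicator B (R w) * cos (s * X w) \<partial>M) + \<i> * complex_of_real (\<integral>w. indicator B (R w) * sin (s * X w) \<partial>M)"
    by (simp only: integral_mult_right_zero integral_complex_of_real)
  also have "\<dots> = complex_of_real (\<integral>w. indicator B (R w) \<partial>M) * (complex_of_real (\<integral>w. cos (s * X w) \<partial>M) + \<i> * complex_of_real (\<integral>w. sin (s * X w) \<partial>M))"
    unfolding C S by (simp add: algebra_simps)
  also have "complex_of_real (\<integral>w. cos (s * X w) \<partial>M) + \<i> * complex_of_real (\<integral>w. sin (s * X w) \<partial>M) = u"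
    unfolding Ecos Esin by (simp add: field_simps)
  finally show ?thesis unfolding u_def by (simp add: mult.commute)
qed

lemma ind_meas:
  fixes X R :: "'w \<Rightarrow> real"
  shows "(\<integral>w. (indicator A (X w) * indicator B (R w) :: real) \<partial>M) = measure M ((\<lambda>w. (X w, R w)) -` (A \<times> B) \<inter> space M)"
    and "(\<integral>w. (indicator A (X w) :: real) \<partial>M) = measure M (X -` A \<inter> space M)"
proof -
  have "(\<integral>w. (indicator A (X w) * indicator B (R w) :: real) \<partial>M) = (\<integral>w. indicator ((\<lambda>w. (X w, R w)) -` (A \<times> B) \<inter> space M) w \<partial>M)"
    by (intro Bochner_Integration.integral_cong) (auto simp: indicator_def)
  then show "(\<integral>w. (indicator A (X w) * indicator B (R w) :: real) \<partial>M) = measure M ((\<lambda>w. (X w, R w)) -` (A \<times> B) \<inter> space M)"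
    by (simp add: Int_assoc)
  have "(\<integral>w. (indicator A (X w) :: real) \<partial>M) = (\<integral>w. indicator (X -` A \<inter> space M) w \<partial>M)"
    by (intro Bochner_Integration.integral_cong) (auto simp: indicator_def)
  then show "(\<integral>w. (indicator A (X w) :: real) \<partial>M) = measure M (X -` A \<inter> space M)"
    by (simp add: Int_assoc)
qed

lemma indep_from_char:
  fixes X R :: "'w \<Rightarrow> real"
  assumes P: "prob_space M" and Xm[measurable]: "X \<in> borel_measurable M" and Rm[measurable]: "R \<in> borel_measurable M"
    and CF: "\<And>s t. (CLINT w|M. iexp (s * X w + t * R w)) = (CLINT w|M. iexp (s * X w)) * (CLINT w|M. iexp (t * R w))"
  shows "prob_space.indep_var M borel X borel R"
proof -
  interpret prob_space M by fact
  have rect: "(\<integral>w. (indicator A (X w) * indicator B (R w) :: real) \<partial>M) = (\<integral>w. (indicator A (X w) :: real) \<partial>M) * (\<integral>w. (indicator B (R w) :: real) \<partial>M)"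
    if A[measurable]: "A \<in> sets borel" and B[measurable]: "B \<in> sets borel" for A B
  proof -
    have "(\<integral>w. (indicator A (X w) * indicator B (R w) :: real) \<partial>M) = (\<integral>w. (indicator A (X w) :: real) \<partial>M) * (\<integral>w. indicator B (R w) \<partial>M)"
      by (rule levy_trick[OF P Xm _ _ stepA[OF P Xm Rm CF B] A]) (auto simp: indicator_def)
    then show ?thesis .
  qed
  have sf: "sigma_finite_measure (distr M borel f)" if "f \<in> borel_measurable M" for f :: "'w \<Rightarrow> real"
    using prob_space_distr[OF that] by (rule prob_space_imp_sigma_finite)
  have "distr M borel X \<Otimes>\<^sub>M distr M borel R = distr M (borel \<Otimes>\<^sub>M borel) (\<lambda>x. (X x, R x))"
  proof (rule pair_measure_eqI[OF sf[OF Xm] sf[OF Rm]])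
    show "sets (distr M borel X \<Otimes>\<^sub>M distr M borel R) = sets (distr M (borel \<Otimes>\<^sub>M borel) (\<lambda>x. (X x, R x)))"
      by simp
    fix A B assume A: "A \<in> sets (distr M borel X)" and B: "B \<in> sets (distr M borel R)"
    then have [measurable]: "A \<in> sets borel" "B \<in> sets borel" by auto
    have "emeasure (distr M borel X) A * emeasure (distr M borel R) B =
      ennreal (measure M (X -` A \<inter> space M)) * ennreal (measure M (R -` B \<inter> space M))"
      by (simp add: emeasure_distr emeasure_eq_measure)
    also have "\<dots> = ennreal (measure M (X -` A \<inter> space M) * measure M (R -` B \<inter> space M))"
      by (simp add: ennreal_mult)
    also have "measure M (X -` A \<inter> space M) * measure M (R -` B \<inter> space M) = measure M ((\<lambda>w. (X w, R w)) -` (A \<times> B) \<inter> space M)"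
      using rect[of A B] unfolding ind_meas by simp
    also have "ennreal \<dots> = emeasure (distr M (borel \<Otimes>\<^sub>M borel) (\<lambda>x. (X x, R x))) (A \<times> B)"
      by (simp add: emeasure_distr emeasure_eq_measure)
    finally show "emeasure (distr M borel X) A * emeasure (distr M borel R) B = emeasure (distr M (borel \<Otimes>\<^sub>M borel) (\<lambda>x. (X x, R x))) (A \<times> B)" .
  qed
  then show ?thesis by (subst indep_var_distribution_eq) simp
qed

lemma fst_borel[measurable]: "fst \<in> borel_measurable (borel :: ('a::second_countable_topology \<times> 'b::second_countable_topology) measure)"
  by (metis borel_prod measurable_fst)
lemma snd_borel[measurable]: "snd \<in> borel_measurable (borel :: ('a::second_countable_topology \<times> 'b::second_countable_topology) measure)"
  by (metis borel_prod measurable_snd)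

lemma distr_pair_snd':
  assumes "prob_space N" "prob_space M"
  shows "distr (N \<Otimes>\<^sub>M M) M snd = M"
proof -
  interpret N: prob_space N by fact
  interpret M: prob_space M by fact
  interpret pair_sigma_finite N M ..
  show ?thesis
  proof (intro measure_eqI)
    fix A assume A: "A \<in> sets (distr (N \<Otimes>\<^sub>M M) M snd)"
    from A have "emeasure (distr (N \<Otimes>\<^sub>M M) M snd) A = emeasure (N \<Otimes>\<^sub>M M) (space N \<times> A)"
      by (auto simp add: emeasure_distr space_pair_measure dest: sets.sets_into_space intro!: arg_cong2[where f=emeasure])
    moreover have "emeasure (N \<Otimes>\<^sub>M M) (space N \<times> A) = emeasure N (space N) * emeasure M A"
      using A by (intro M.emeasure_pair_measure_Times) auto
    ultimately show "emeasure (distr (N \<Otimes>\<^sub>M M) M snd) A = emeasure M A"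
      by (simp add: N.emeasure_space_1)
  qed simp
qed

lemma coupling_bound:
  fixes A B U V :: "'n \<Rightarrow> real" and X Y :: "'w \<Rightarrow> real"
  assumes PN: "prob_space N" and [measurable]: "A \<in> borel_measurable N" "B \<in> borel_measurable N"
     "U \<in> borel_measurable N" "V \<in> borel_measurable N"
    and J: "distr N borel (\<lambda>z. (A z, B z)) = distr M borel (\<lambda>w. (X w, Y w))"
    and K: "distr N borel (\<lambda>z. (U z, V z)) = distr M borel X \<Otimes>\<^sub>M distr M borel Y"
  shows "eCov M X Y \<le> (\<integral>\<^sup>+ z. ennreal (\<bar>A z - U z\<bar> + \<bar>B z - V z\<bar>) \<partial>N)"
proof -
  define F where "F z = ((A z, B z), (U z, V z))" for z
  have Fm[measurable]: "F \<in> borel_measurable N" unfolding F_def by measurable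
  define \<gamma> where "\<gamma> = distr N borel F"
  have "\<gamma> \<in> couplings (distr M borel (\<lambda>w. (X w, Y w))) (distr M borel X \<Otimes>\<^sub>M distr M borel Y)"
    unfolding couplings_def
  proof (intro CollectI conjI)
    show "prob_space \<gamma>" unfolding \<gamma>_def by (rule prob_space.prob_space_distr[OF PN Fm])
    show "sets \<gamma> = sets borel" unfolding \<gamma>_def by simp
    have "distr \<gamma> borel fst = distr N borel (fst \<circ> F)"
      unfolding \<gamma>_def by (rule distr_distr) auto
    also have "fst \<circ> F = (\<lambda>z. (A z, B z))" by (auto simp: F_def)
    finally show "distr \<gamma> borel fst = distr M borel (\<lambda>w. (X w, Y w))" using J by simp
    have "distr \<gamma> borel snd = distr N borel (snd \<circ> F)"
      unfolding \<gamma>_def by (rule distr_distr) auto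
    also have "snd \<circ> F = (\<lambda>z. (U z, V z))" by (auto simp: F_def)
    finally show "distr \<gamma> borel snd = distr M borel X \<Otimes>\<^sub>M distr M borel Y" using K by simp
  qed
  then have "eCov M X Y \<le> (\<integral>\<^sup>+ z. ennreal (manhattan (fst z) (snd z)) \<partial>\<gamma>)"
    unfolding eCov_def emd_def by (rule INF_lower)
  also have "\<dots> = (\<integral>\<^sup>+ z. ennreal (manhattan (fst (F z)) (snd (F z))) \<partial>N)"
    unfolding \<gamma>_def by (rule nn_integral_distr) (auto simp: manhattan_def)
  also have "\<dots> = (\<integral>\<^sup>+ z. ennreal (\<bar>A z - U z\<bar> + \<bar>B z - V z\<bar>) \<partial>N)"
    by (simp add: F_def manhattan_def)
  finally show ?thesis .
qed

lemma evar_lower: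
  fixes X :: "'w \<Rightarrow> real"
  assumes P: "prob_space M" and [measurable]: "X \<in> borel_measurable M"
  shows "(\<integral>\<^sup>+ p. ennreal \<bar>fst p - snd p\<bar> \<partial>(distr M borel X \<Otimes>\<^sub>M distr M borel X)) \<le> eVar M X"
  unfolding eVar_def eCov_def emd_def
proof (rule INF_greatest)
  fix \<gamma> assume "\<gamma> \<in> couplings (distr M borel (\<lambda>w. (X w, X w))) (distr M borel X \<Otimes>\<^sub>M distr M borel X)"
  then have sg: "sets \<gamma> = sets borel" and g1: "distr \<gamma> borel fst = distr M borel (\<lambda>w. (X w, X w))"
    and g2: "distr \<gamma> borel snd = distr M borel X \<Otimes>\<^sub>M distr M borel X"
    unfolding couplings_def by auto
  have [measurable_cong]: "sets \<gamma> = sets (borel :: ((real \<times> real) \<times> (real \<times> real)) measure)" by (rule sg)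
  have m1: "(\<lambda>z. ennreal \<bar>fst (fst z) - snd (fst z)\<bar>) \<in> borel_measurable \<gamma>" by measurable
  have m2: "(\<lambda>z. ennreal \<bar>fst (snd z) - snd (snd z)\<bar>) \<in> borel_measurable \<gamma>" by measurable
  have m3: "(\<lambda>z. ennreal (manhattan (fst z) (snd z))) \<in> borel_measurable \<gamma>" unfolding manhattan_def by measurable
  have "(\<integral>\<^sup>+ p. ennreal \<bar>fst p - snd p\<bar> \<partial>(distr M borel X \<Otimes>\<^sub>M distr M borel X)) =
      (\<integral>\<^sup>+ z. ennreal \<bar>fst (snd z) - snd (snd z)\<bar> \<partial>\<gamma>)"
    unfolding g2[symmetric] by (rule nn_integral_distr) auto
  also have "\<dots> \<le> (\<integral>\<^sup>+ z. ennreal (manhattan (fst z) (snd z)) + ennreal \<bar>fst (fst z) - snd (fst z)\<bar> \<partial>\<gamma>)"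
    by (intro nn_integral_mono) (auto simp: manhattan_def simp flip: ennreal_plus)
  also have "\<dots> = (\<integral>\<^sup>+ z. ennreal (manhattan (fst z) (snd z)) \<partial>\<gamma>) + (\<integral>\<^sup>+ z. ennreal \<bar>fst (fst z) - snd (fst z)\<bar> \<partial>\<gamma>)"
    by (rule nn_integral_add[OF m3 m1])
  also have "(\<integral>\<^sup>+ z. ennreal \<bar>fst (fst z) - snd (fst z)\<bar> \<partial>\<gamma>) = (\<integral>\<^sup>+ p. ennreal \<bar>fst p - snd p\<bar> \<partial>distr \<gamma> borel fst)"
    by (rule nn_integral_distr[symmetric]) auto
  also have "\<dots> = (\<integral>\<^sup>+ w. ennreal \<bar>X w - X w\<bar> \<partial>M)"
    unfolding g1 by (subst nn_integral_distr) auto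
  also have "\<dots> = 0" by simp
  finally show "(\<integral>\<^sup>+ p. ennreal \<bar>fst p - snd p\<bar> \<partial>(distr M borel X \<Otimes>\<^sub>M distr M borel X)) \<le>
      (\<integral>\<^sup>+ z. ennreal (manhattan (fst z) (snd z)) \<partial>\<gamma>)" by simp
qed

lemma prodpair:
  fixes f g :: "'w \<Rightarrow> real"
  assumes P: "prob_space M" and [measurable]: "f \<in> borel_measurable M" "g \<in> borel_measurable M"
  shows "distr (M \<Otimes>\<^sub>M M) borel (\<lambda>z. (f (fst z), g (snd z))) = distr M borel f \<Otimes>\<^sub>M distr M borel g"
proof -
  interpret prob_space M by fact
  have "distr M borel f \<Otimes>\<^sub>M distr M borel g = distr (M \<Otimes>\<^sub>M M) (borel \<Otimes>\<^sub>M borel) (\<lambda>(x, y). (f x, g y))"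
  proof (rule pair_measure_distr)
    show "sigma_finite_measure (distr M borel g)" by (rule prob_space_imp_sigma_finite, rule prob_space_distr) simp
  qed auto
  also have "\<dots> = distr (M \<Otimes>\<^sub>M M) borel (\<lambda>z. (f (fst z), g (snd z)))"
    by (simp add: borel_prod case_prod_beta')
  finally show ?thesis ..
qed

lemma distr_fst_comp:
  fixes h :: "'w \<Rightarrow> 'b::second_countable_topology"
  assumes P: "prob_space M" and [measurable]: "h \<in> borel_measurable M"
  shows "distr (M \<Otimes>\<^sub>M M) borel (\<lambda>z. h (fst z)) = distr M borel h"
    and "distr (M \<Otimes>\<^sub>M M) borel (\<lambda>z. h (snd z)) = distr M borel h"
proof -
  interpret prob_space M by fact
  have "distr (M \<Otimes>\<^sub>M M) borel (\<lambda>z. h (fst z)) = distr (distr (M \<Otimes>\<^sub>M M) M fst) borel h"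
    by (subst distr_distr) (auto simp: comp_def)
  then show "distr (M \<Otimes>\<^sub>M M) borel (\<lambda>z. h (fst z)) = distr M borel h" by (simp add: distr_pair_fst)
  have "distr (M \<Otimes>\<^sub>M M) borel (\<lambda>z. h (snd z)) = distr (distr (M \<Otimes>\<^sub>M M) M snd) borel h"
    by (subst distr_distr) (auto simp: comp_def)
  then show "distr (M \<Otimes>\<^sub>M M) borel (\<lambda>z. h (snd z)) = distr M borel h" by (simp add: distr_pair_snd'[OF P P])
qed

lemma ecov_prod_bounds:
  fixes X Y :: "'w \<Rightarrow> real"
  assumes P: "prob_space M" and [measurable]: "X \<in> borel_measurable M" "Y \<in> borel_measurable M"
  shows "eCov M X Y \<le> (\<integral>\<^sup>+ p. ennreal \<bar>fst p - snd p\<bar> \<partial>(distr M borel Y \<Otimes>\<^sub>M distr M borel Y))"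
    and "eCov M X Y \<le> (\<integral>\<^sup>+ p. ennreal \<bar>fst p - snd p\<bar> \<partial>(distr M borel X \<Otimes>\<^sub>M distr M borel X))"
proof -
  interpret prob_space M by fact
  interpret MM: prob_space "M \<Otimes>\<^sub>M M" by (rule prob_space_pair) (rule P)+
  have PMM: "prob_space (M \<Otimes>\<^sub>M M)" by (rule MM.prob_space_axioms)
  have K: "distr (M \<Otimes>\<^sub>M M) borel (\<lambda>z. (X (fst z), Y (snd z))) = distr M borel X \<Otimes>\<^sub>M distr M borel Y"
    by (rule prodpair) (auto simp: P)
  have J1: "distr (M \<Otimes>\<^sub>M M) borel (\<lambda>z. (X (fst z), Y (fst z))) = distr M borel (\<lambda>w. (X w, Y w))"
    using distr_fst_comp(1)[OF P, of "\<lambda>w. (X w, Y w)"] by simp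
  have J2: "distr (M \<Otimes>\<^sub>M M) borel (\<lambda>z. (X (snd z), Y (snd z))) = distr M borel (\<lambda>w. (X w, Y w))"
    using distr_fst_comp(2)[OF P, of "\<lambda>w. (X w, Y w)"] by simp
  have "eCov M X Y \<le> (\<integral>\<^sup>+ z. ennreal (\<bar>X (fst z) - X (fst z)\<bar> + \<bar>Y (fst z) - Y (snd z)\<bar>) \<partial>(M \<Otimes>\<^sub>M M))"
    by (rule coupling_bound[OF PMM _ _ _ _ J1 K]) auto
  also have "\<dots> = (\<integral>\<^sup>+ z. ennreal \<bar>fst (Y (fst z), Y (snd z)) - snd (Y (fst z), Y (snd z))\<bar> \<partial>(M \<Otimes>\<^sub>M M))"
    by simp
  also have "\<dots> = (\<integral>\<^sup>+ p. ennreal \<bar>fst p - snd p\<bar> \<partial>distr (M \<Otimes>\<^sub>M M) borel (\<lambda>z. (Y (fst z), Y (snd z))))"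
    by (rule nn_integral_distr[symmetric]) auto
  finally show "eCov M X Y \<le> (\<integral>\<^sup>+ p. ennreal \<bar>fst p - snd p\<bar> \<partial>(distr M borel Y \<Otimes>\<^sub>M distr M borel Y))"
    by (simp add: prodpair[OF P])
  have "eCov M X Y \<le> (\<integral>\<^sup>+ z. ennreal (\<bar>X (snd z) - X (fst z)\<bar> + \<bar>Y (snd z) - Y (snd z)\<bar>) \<partial>(M \<Otimes>\<^sub>M M))"
    by (rule coupling_bound[OF PMM _ _ _ _ J2 K]) auto
  also have "\<dots> = (\<integral>\<^sup>+ z. ennreal \<bar>fst (X (fst z), X (snd z)) - snd (X (fst z), X (snd z))\<bar> \<partial>(M \<Otimes>\<^sub>M M))"
    by (simp add: abs_minus_commute)
  also have "\<dots> = (\<integral>\<^sup>+ p. ennreal \<bar>fst p - snd p\<bar> \<partial>distr (M \<Otimes>\<^sub>M M) borel (\<lambda>z. (X (fst z), X (snd z))))"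
    by (rule nn_integral_distr[symmetric]) auto
  finally show "eCov M X Y \<le> (\<integral>\<^sup>+ p. ennreal \<bar>fst p - snd p\<bar> \<partial>(distr M borel X \<Otimes>\<^sub>M distr M borel X))"
    by (simp add: prodpair[OF P])
qed

lemma dnorm:
  fixes X :: "'w \<Rightarrow> real"
  assumes P: "prob_space M" and D: "distributed M lborel X (normal_density m \<sigma>)" and s: "\<sigma> > 0"
  shows "(\<integral>\<^sup>+ p. ennreal \<bar>fst p - snd p\<bar> \<partial>(distr M borel X \<Otimes>\<^sub>M distr M borel X)) = ennreal (sqrt (2 * \<sigma>\<^sup>2) * sqrt (2 / pi))"
proof -
  interpret prob_space M by fact
  have Xm[measurable]: "X \<in> borel_measurable M" using distributed_measurable[OF D] by simp
  define Q where "Q = distr M borel X"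
  have PQ: "prob_space Q" unfolding Q_def by (rule prob_space_distr) simp
  interpret Q: prob_space Q by (rule PQ)
  have sQ: "sets Q = sets borel" unfolding Q_def by simp
  have QD: "Q = density lborel (normal_density m \<sigma>)"
  proof -
    have "Q = distr M lborel X" unfolding Q_def by (rule distr_cong) auto
    then show ?thesis using distributed_distr_eq_density[OF D] by simp
  qed
  interpret QQ: pair_prob_space Q Q ..
  have PN: "prob_space (Q \<Otimes>\<^sub>M Q)" by (rule QQ.prob_space_axioms)
  interpret N: prob_space "Q \<Otimes>\<^sub>M Q" by (rule PN)
  have sN: "sets (Q \<Otimes>\<^sub>M Q) = sets (borel \<Otimes>\<^sub>M borel)"
    by (intro sets_pair_measure_cong sQ)
  have fm[measurable]: "fst \<in> borel_measurable (Q \<Otimes>\<^sub>M Q)" "snd \<in> borel_measurable (Q \<Otimes>\<^sub>M Q)"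
    using measurable_fst[of Q Q] measurable_snd[of Q Q] by (simp_all add: measurable_cong_sets[OF refl sQ])
  have d1: "distr (Q \<Otimes>\<^sub>M Q) borel fst = Q"
  proof -
    have "distr (Q \<Otimes>\<^sub>M Q) borel fst = distr (Q \<Otimes>\<^sub>M Q) Q fst" by (rule distr_cong) (auto simp: sQ)
    then show ?thesis by (simp add: Q.distr_pair_fst)
  qed
  have d2: "distr (Q \<Otimes>\<^sub>M Q) borel snd = Q"
  proof -
    have "distr (Q \<Otimes>\<^sub>M Q) borel snd = distr (Q \<Otimes>\<^sub>M Q) Q snd" by (rule distr_cong) (auto simp: sQ)
    then show ?thesis by (simp add: distr_pair_snd'[OF PQ PQ])
  qed
  have IND: "prob_space.indep_var (Q \<Otimes>\<^sub>M Q) borel fst borel snd"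
  proof (subst prob_space.indep_var_distribution_eq[OF PN], intro conjI)
    show "distr (Q \<Otimes>\<^sub>M Q) borel fst \<Otimes>\<^sub>M distr (Q \<Otimes>\<^sub>M Q) borel snd = distr (Q \<Otimes>\<^sub>M Q) (borel \<Otimes>\<^sub>M borel) (\<lambda>x. (fst x, snd x))"
      unfolding d1 d2 by (simp add: distr_id2 sN)
  qed (use fm in auto)
  have D1: "distributed (Q \<Otimes>\<^sub>M Q) lborel fst (normal_density m \<sigma>)"
    unfolding distributed_def
  proof (intro conjI)
    have "distr (Q \<Otimes>\<^sub>M Q) lborel fst = distr (Q \<Otimes>\<^sub>M Q) borel fst" by (rule distr_cong) auto
    then show "distr (Q \<Otimes>\<^sub>M Q) lborel fst = density lborel (normal_density m \<sigma>)" using d1 QD by simp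
  qed (use fm in auto)
  have D2: "distributed (Q \<Otimes>\<^sub>M Q) lborel snd (normal_density m \<sigma>)"
    unfolding distributed_def
  proof (intro conjI)
    have "distr (Q \<Otimes>\<^sub>M Q) lborel snd = distr (Q \<Otimes>\<^sub>M Q) borel snd" by (rule distr_cong) auto
    then show "distr (Q \<Otimes>\<^sub>M Q) lborel snd = density lborel (normal_density m \<sigma>)" using d2 QD by simp
  qed (use fm in auto)
  have DD: "distributed (Q \<Otimes>\<^sub>M Q) lborel (\<lambda>x. fst x - snd x) (normal_density (m - m) (sqrt (\<sigma>\<^sup>2 + \<sigma>\<^sup>2)))"
    by (rule prob_space.diff_indep_normal[OF PN IND s s D1 D2])
  have "(\<integral>\<^sup>+ p. ennreal \<bar>(fst p - snd p) - (m - m)\<bar> \<partial>(Q \<Otimes>\<^sub>M Q)) = ennreal (sqrt (\<sigma>\<^sup>2 + \<sigma>\<^sup>2) * sqrt (2 / pi))"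
    by (rule gauss_normal(6)[OF PN DD]) (use s in simp)
  then show ?thesis unfolding Q_def by simp
qed

lemma alg_pre: fixes vX vY C k :: real assumes "vX > 0" "C^2 = (1 - k^2) * vX * vY"
  shows "(C/vX)^2 * vX = (1 - k^2) * vY" "(C/vX) * C = (1 - k^2) * vY"
  using assms by (simp_all add: field_simps power2_eq_square)
lemma alg1: fixes vX vY C k :: real assumes "vX > 0" "C^2 = (1 - k^2) * vX * vY"
  shows "(- (C/vX))^2 * vX + 2 * (- (C/vX)) * 1 * C + 1^2 * vY = k^2 * vY"
proof -
  have "(- (C/vX))^2 * vX + 2 * (- (C/vX)) * 1 * C + 1^2 * vY = (C/vX)^2 * vX - 2 * ((C/vX) * C) + vY"
    by (simp add: power2_eq_square)
  then show ?thesis unfolding alg_pre[OF assms] by (simp add: algebra_simps)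
qed
lemma alg2_gen: fixes b vX vY C k :: real assumes "k > 0"
  shows "(- b / k)^2 * vX + 2 * (- b / k) * (1/k) * C + (1/k)^2 * vY = (b^2 * vX - 2 * (b * C) + vY) / k^2"
  using assms by (simp add: power2_eq_square field_simps)
lemma alg2: fixes vX vY C k :: real assumes "vX > 0" "k > 0" "C^2 = (1 - k^2) * vX * vY"
  shows "(- (C/vX) / k)^2 * vX + 2 * (- (C/vX) / k) * (1/k) * C + (1/k)^2 * vY = vY"
proof -
  have "(- (C/vX) / k)^2 * vX + 2 * (- (C/vX) / k) * (1/k) * C + (1/k)^2 * vY = ((C/vX)^2 * vX - 2 * ((C/vX) * C) + vY) / k^2"
    by (rule alg2_gen[OF assms(2)])
  then show ?thesis unfolding alg_pre[OF assms(1,3)] using assms(2) by (simp add: field_simps power2_eq_square)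
qed
lemma alg3: fixes vX vY C k :: real assumes "vX > 0" "k > 0" "C^2 = (1 - k^2) * vX * vY"
  shows "((C/vX) / k)^2 * vX + 2 * ((C/vX) / k) * (1 - 1/k) * C + (1 - 1/k)^2 * vY = 2 * vY * (1 - k)"
proof -
  have "((C/vX) / k)^2 * vX + 2 * ((C/vX) / k) * (1 - 1/k) * C + (1 - 1/k)^2 * vY = ((C/vX)^2 * vX + 2 * ((C/vX) * C) * (k - 1) + (k - 1)^2 * vY) / k^2"
    using assms(2) by (simp add: power2_eq_square field_simps)
  then show ?thesis unfolding alg_pre[OF assms(1,3)] using assms(2) by (simp add: field_simps power2_eq_square)
qed

lemma gl:
  assumes P: "prob_space M" and BN: "bivariate_normal M X Y"
  shows "gaussian_rv M (\<lambda>w. a * X w + b * Y w + d)"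
  using gauss_shift[OF P, of "\<lambda>w. a * X w + b * Y w" d] BN unfolding bivariate_normal_def by blast

lemma iexp_mul: "iexp (a + b) * complex_of_real (exp (x + y)) = (iexp a * complex_of_real (exp x)) * (iexp b * complex_of_real (exp y))"
proof -
  have "iexp (a + b) = iexp a * iexp b" by (simp add: distrib_left exp_add)
  moreover have "exp (x + y) = exp x * exp y" by (simp add: exp_add)
  ultimately show ?thesis by (simp add: algebra_simps)
qed

lemma residual:
  fixes X Y :: "'w \<Rightarrow> real"
  assumes P: "prob_space M" and Xm[measurable]: "X \<in> borel_measurable M" and Ym[measurable]: "Y \<in> borel_measurable M"
    and BN: "bivariate_normal M X Y"
    and vXp: "covariance M X X > 0" and vYp: "covariance M Y Y > 0"
    and k: "k > 0" and kC: "(covariance M X Y)\<^sup>2 = (1 - k\<^sup>2) * covariance M X X * covariance M Y Y"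
  shows "\<exists>Y'. Y' \<in> borel_measurable M \<and> prob_space.indep_var M borel X borel Y' \<and> prob_space.indep_var M borel Y' borel X
      \<and> distr M borel Y' = distr M borel Y
      \<and> (\<integral>\<^sup>+ w. ennreal \<bar>Y w - Y' w\<bar> \<partial>M) = ennreal (sqrt (2 * covariance M Y Y * (1 - k)) * sqrt (2 / pi))"
proof -
  interpret prob_space M by fact
  define vX where "vX = covariance M X X"
  define vY where "vY = covariance M Y Y"
  define C where "C = covariance M X Y"
  define mX where "mX = (\<integral>w. X w \<partial>M)"
  define mY where "mY = (\<integral>w. Y w \<partial>M)"
  define \<beta> where "\<beta> = C / vX"
  have vX0: "vX > 0" and vY0: "vY > 0" using vXp vYp by (simp_all add: vX_def vY_def)
  have kC': "C\<^sup>2 = (1 - k\<^sup>2) * vX * vY" using kC by (simp add: C_def vX_def vY_def)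
  have GX: "gaussian_rv M X" using gl[OF P BN, of 1 0 0] by simp
  have GY: "gaussian_rv M Y" using gl[OF P BN, of 0 1 0] by simp
  note gX = gauss_rv[OF P GX] and gY = gauss_rv[OF P GY]
  note CL = cov_lin[OF P gX(1) gY(1) gX(2) gY(2)]
  have E: "(\<integral>w. a * X w + b * Y w + d \<partial>M) = a * mX + b * mY + d" for a b d
    using CL(1) by (simp add: mX_def mY_def)
  have V: "covariance M (\<lambda>w. a * X w + b * Y w + d) (\<lambda>w. a * X w + b * Y w + d) = a\<^sup>2 * vX + 2 * a * b * C + b\<^sup>2 * vY" for a b d
    using CL(2) by (simp add: vX_def vY_def C_def)
  note G = gauss_rv[OF P gl[OF P BN]]
  define R where "R = (\<lambda>w. (- \<beta>) * X w + 1 * Y w + 0)"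
  have Rm[measurable]: "R \<in> borel_measurable M" unfolding R_def by measurable
  define ER where "ER = - \<beta> * mX + 1 * mY + 0"
  define VR where "VR = (- \<beta>)\<^sup>2 * vX + 2 * (- \<beta>) * 1 * C + 1\<^sup>2 * vY"
  have bv: "\<beta> * vX = C" using vX0 by (simp add: \<beta>_def)
  have CF: "(CLINT w|M. iexp (s * X w + t * R w)) = (CLINT w|M. iexp (s * X w)) * (CLINT w|M. iexp (t * R w))" for s t
  proof -
    have e1: "(CLINT w|M. iexp (s * X w + t * R w)) = (CLINT w|M. iexp (1 * ((s - t * \<beta>) * X w + t * Y w + 0)))"
      by (simp add: R_def algebra_simps)
    have e2: "(CLINT w|M. iexp (1 * ((s - t * \<beta>) * X w + t * Y w + 0))) =
       iexp (s * mX + t * ER) * complex_of_real (exp (- (s\<^sup>2 * vX) / 2 + - (t\<^sup>2 * VR) / 2))"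
    proof -
      have v: "(s - t * \<beta>)\<^sup>2 * vX + 2 * (s - t * \<beta>) * t * C + t\<^sup>2 * vY = s\<^sup>2 * vX + t\<^sup>2 * VR"
        unfolding VR_def using bv by (simp add: power2_eq_square algebra_simps) (simp add: bv[symmetric] algebra_simps)
      have m: "1 * ((s - t * \<beta>) * mX + t * mY + 0) = s * mX + t * ER" by (simp add: ER_def algebra_simps)
      have w: "- (1\<^sup>2 * ((s - t * \<beta>)\<^sup>2 * vX + 2 * (s - t * \<beta>) * t * C + t\<^sup>2 * vY)) / 2 = - (s\<^sup>2 * vX) / 2 + - (t\<^sup>2 * VR) / 2"
        unfolding v by simp
      show ?thesis unfolding G(3) E V m w ..
    qed
    have e3: "(CLINT w|M. iexp (s * X w)) = iexp (s * mX) * complex_of_real (exp (- (s\<^sup>2 * vX) / 2))"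
      using gX(3)[of s] by (simp add: mX_def vX_def)
    have e4: "(CLINT w|M. iexp (t * R w)) = iexp (t * ER) * complex_of_real (exp (- (t\<^sup>2 * VR) / 2))"
      using G(3)[of t "- \<beta>" 1 0] unfolding R_def E V ER_def VR_def .
    show ?thesis unfolding e1 e2 e3 e4 by (rule iexp_mul)
  qed
  have IXR: "indep_var borel X borel R" by (rule indep_from_char[OF P Xm Rm CF])
  have IRX: "indep_var borel R borel X"
  proof (rule indep_from_char[OF P Rm Xm])
    fix s t
    have "(\<lambda>w. iexp (s * R w + t * X w)) = (\<lambda>w. iexp (t * X w + s * R w))" by (simp add: add.commute)
    then have "(CLINT w|M. iexp (s * R w + t * X w)) = (CLINT w|M. iexp (t * X w + s * R w))" by (rule arg_cong)
    also have "\<dots> = (CLINT w|M. iexp (t * X w)) * (CLINT w|M. iexp (s * R w))" by (rule CF)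
    also have "\<dots> = (CLINT w|M. iexp (s * R w)) * (CLINT w|M. iexp (t * X w))" by (rule mult.commute)
    finally show "(CLINT w|M. iexp (s * R w + t * X w)) = (CLINT w|M. iexp (s * R w)) * (CLINT w|M. iexp (t * X w))" .
  qed
  define f where "f r = mY + (r - ER) / k" for r
  have fm[measurable]: "f \<in> borel_measurable borel" unfolding f_def by measurable
  define Y' where "Y' = (\<lambda>w. (- \<beta> / k) * X w + (1 / k) * Y w + (mY - ER / k))"
  have Y'f: "Y' = f \<circ> R" using k by (auto simp: Y'_def f_def R_def fun_eq_iff field_simps)
  have Y'm[measurable]: "Y' \<in> borel_measurable M" unfolding Y'_def by measurable
  have idX: "(\<lambda>x. x) \<circ> X = X" by (simp add: comp_def)
  have I1: "indep_var borel X borel Y'"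
  proof -
    have "indep_var borel ((\<lambda>x. x) \<circ> X) borel (f \<circ> R)" by (rule indep_var_compose[OF IXR]) (simp_all add: fm)
    then show ?thesis by (simp only: idX Y'f)
  qed
  have I2: "indep_var borel Y' borel X"
  proof -
    have "indep_var borel (f \<circ> R) borel ((\<lambda>x. x) \<circ> X)" by (rule indep_var_compose[OF IRX]) (simp_all add: fm)
    then show ?thesis by (simp only: idX Y'f)
  qed
  have EY': "(\<integral>w. Y' w \<partial>M) = mY"
    unfolding Y'_def E ER_def using k by (simp add: field_simps)
  have VY': "covariance M Y' Y' = vY"
    unfolding Y'_def V \<beta>_def by (rule alg2[OF vX0 k kC'])
  have DY': "distributed M lborel Y' (normal_density mY (sqrt vY))"
    using G(5)[of "- \<beta> / k" "1 / k" "mY - ER / k"] vY0 unfolding Y'_def[symmetric] EY' VY' by simp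
  have DY: "distributed M lborel Y (normal_density mY (sqrt vY))"
    using gY(5) vY0 by (simp add: mY_def vY_def)
  have dist: "distr M borel Y' = distr M borel Y"
  proof -
    have "distr M borel Y' = distr M lborel Y'" by (rule distr_cong) auto
    also have "\<dots> = distr M lborel Y" using distributed_distr_eq_density[OF DY'] distributed_distr_eq_density[OF DY] by simp
    also have "\<dots> = distr M borel Y" by (rule distr_cong) auto
    finally show ?thesis .
  qed
  define Z2 where "Z2 = (\<lambda>w. (\<beta> / k) * X w + (1 - 1 / k) * Y w + (ER / k - mY))"
  have YZ: "Y w - Y' w = Z2 w" for w using k by (simp add: Z2_def Y'_def field_simps)
  have EZ2: "(\<integral>w. Z2 w \<partial>M) = 0"
    unfolding Z2_def E ER_def using k by (simp add: field_simps)
  have VZ2: "covariance M Z2 Z2 = 2 * vY * (1 - k)"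
    unfolding Z2_def V \<beta>_def by (rule alg3[OF vX0 k kC'])
  have "(\<integral>\<^sup>+ w. ennreal \<bar>Y w - Y' w\<bar> \<partial>M) = ennreal (sqrt (2 * vY * (1 - k)) * sqrt (2 / pi))"
    using G(4)[of "\<beta> / k" "1 - 1 / k" "ER / k - mY"] unfolding Z2_def[symmetric] EZ2 VZ2 YZ by (simp add: Z2_def)
  then show ?thesis using Y'm I1 I2 dist unfolding vY_def by blast
qed

lemma final_arith:
  fixes a eX eY sX sY q :: real
  assumes "0 \<le> a" "a \<le> sY * q" "a \<le> sX * q" "eX = 0 \<or> eX \<ge> sX" "eY = 0 \<or> eY \<ge> sY" "sX > 0" "sY > 0" "q \<ge> 0"
  shows "a / min eX eY \<le> q"
proof (cases "eX = 0 \<or> eY = 0")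
  case True
  then have "min eX eY = 0" using assms(4,5,6,7) by auto
  then show ?thesis using assms(8) by simp
next
  case False
  then have x: "eX \<ge> sX" and y: "eY \<ge> sY" using assms(4,5) by auto
  show ?thesis
  proof (cases "eX \<le> eY")
    case True
    then have "min eX eY = eX" by simp
    moreover have "a / eX \<le> a / sX" using x assms(1,6) by (intro divide_left_mono) auto
    moreover have "a / sX \<le> q" using assms(3,6) by (simp add: divide_le_eq mult.commute)
    ultimately show ?thesis by simp
  next
    case False
    then have "min eX eY = eY" by simp
    moreover have "a / eY \<le> a / sY" using y assms(1,7) by (intro divide_left_mono) auto
    moreover have "a / sY \<le> q" using assms(2,7) by (simp add: divide_le_eq mult.commute)
    ultimately show ?thesis by simp
  qed
qed

lemma rho_arith:
  fixes \<rho> :: real assumes "\<rho>\<^sup>2 \<le> 1"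
  shows "sqrt (1 - sqrt (1 - \<rho>\<^sup>2)) \<le> \<bar>\<rho>\<bar>"
    and "\<rho> \<notin> {-1, 0, 1} \<longrightarrow> sqrt (1 - sqrt (1 - \<rho>\<^sup>2)) < \<bar>\<rho>\<bar>"
proof -
  define k where "k = sqrt (1 - \<rho>\<^sup>2)"
  have k0: "0 \<le> k" and k1: "k \<le> 1" using assms by (auto simp: k_def)
  have kk: "k\<^sup>2 = 1 - \<rho>\<^sup>2" using assms by (simp add: k_def)
  have "k\<^sup>2 \<le> k" using k0 k1 by (simp add: power2_eq_square mult_left_le_one_le)
  then have "1 - k \<le> \<rho>\<^sup>2" using kk by linarith
  then have "sqrt (1 - k) \<le> sqrt (\<rho>\<^sup>2)" by (rule real_sqrt_le_mono)
  then show "sqrt (1 - sqrt (1 - \<rho>\<^sup>2)) \<le> \<bar>\<rho>\<bar>" by (simp add: k_def)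
  show "\<rho> \<notin> {-1, 0, 1} \<longrightarrow> sqrt (1 - sqrt (1 - \<rho>\<^sup>2)) < \<bar>\<rho>\<bar>"
  proof
    assume r: "\<rho> \<notin> {-1, 0, 1}"
    have "\<rho>\<^sup>2 \<noteq> 1"
    proof
      assume "\<rho>\<^sup>2 = 1" then have "\<rho> = 1 \<or> \<rho> = -1" by (simp add: power2_eq_1_iff)
      then show False using r by auto
    qed
    moreover have "\<rho>\<^sup>2 \<noteq> 0" using r by simp
    moreover have "\<rho>\<^sup>2 \<ge> 0" by simp
    ultimately have "1 - \<rho>\<^sup>2 > 0" "1 - \<rho>\<^sup>2 < 1" using assms by linarith+
    then have "k > 0" "k < 1" unfolding k_def by simp_all
    then have "k\<^sup>2 < k" by (simp add: power2_eq_square)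
    then have "1 - k < \<rho>\<^sup>2" using kk by linarith
    then have "sqrt (1 - k) < sqrt (\<rho>\<^sup>2)" by (rule real_sqrt_less_mono)
    then show "sqrt (1 - sqrt (1 - \<rho>\<^sup>2)) < \<bar>\<rho>\<bar>" by (simp add: k_def)
  qed
qed

lemma enn_bound: "x \<le> ennreal y \<Longrightarrow> 0 \<le> y \<Longrightarrow> enn2real x \<le> y"
  using enn2real_mono[of x "ennreal y"] by simp
lemma enn_lower: assumes "ennreal y \<le> x" shows "enn2real x = 0 \<or> enn2real x \<ge> y"
proof (cases "x = \<top>")
  case True then show ?thesis by simp
next
  case False
  then have "enn2real (ennreal y) \<le> enn2real x" using assms enn2real_mono[of "ennreal y" x] by (simp add: less_top)
  moreover have "y \<le> enn2real (ennreal y)" by (cases "y \<ge> 0") (auto simp: ennreal_neg)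
  ultimately show ?thesis by linarith
qed

lemma ecov_upper:
  fixes X Y :: "'w \<Rightarrow> real"
  assumes P: "prob_space M" and Xm[measurable]: "X \<in> borel_measurable M" and Ym[measurable]: "Y \<in> borel_measurable M"
    and BN: "bivariate_normal M X Y"
    and vXp: "covariance M X X > 0" and vYp: "covariance M Y Y > 0"
    and k0: "k \<ge> 0" and kC: "(covariance M X Y)\<^sup>2 = (1 - k\<^sup>2) * covariance M X X * covariance M Y Y"
  shows "eCov M X Y \<le> ennreal (sqrt (2 * covariance M Y Y * (1 - k)) * sqrt (2 / pi))"
    and "eCov M X Y \<le> ennreal (sqrt (2 * covariance M X X * (1 - k)) * sqrt (2 / pi))"
proof -
  interpret prob_space M by fact
  have GX: "gaussian_rv M X" using gl[OF P BN, of 1 0 0] by simp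
  have GY: "gaussian_rv M Y" using gl[OF P BN, of 0 1 0] by simp
  have DX: "(\<integral>\<^sup>+ p. ennreal \<bar>fst p - snd p\<bar> \<partial>(distr M borel X \<Otimes>\<^sub>M distr M borel X)) = ennreal (sqrt (2 * covariance M X X) * sqrt (2 / pi))"
    using dnorm[OF P gauss_rv(5)[OF P GX vXp]] vXp by simp
  have DY: "(\<integral>\<^sup>+ p. ennreal \<bar>fst p - snd p\<bar> \<partial>(distr M borel Y \<Otimes>\<^sub>M distr M borel Y)) = ennreal (sqrt (2 * covariance M Y Y) * sqrt (2 / pi))"
    using dnorm[OF P gauss_rv(5)[OF P GY vYp]] vYp by simp
  have "eCov M X Y \<le> ennreal (sqrt (2 * covariance M Y Y * (1 - k)) * sqrt (2 / pi)) \<and>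
        eCov M X Y \<le> ennreal (sqrt (2 * covariance M X X * (1 - k)) * sqrt (2 / pi))"
  proof (cases "k = 0")
    case True
    then show ?thesis using ecov_prod_bounds[OF P Xm Ym] DX DY by simp
  next
    case False
    then have kp: "k > 0" using k0 by simp
    obtain Y' where Y'm[measurable]: "Y' \<in> borel_measurable M" and I1: "indep_var borel X borel Y'"
      and dY: "distr M borel Y' = distr M borel Y"
      and cY: "(\<integral>\<^sup>+ w. ennreal \<bar>Y w - Y' w\<bar> \<partial>M) = ennreal (sqrt (2 * covariance M Y Y * (1 - k)) * sqrt (2 / pi))"
      using residual[OF P Xm Ym BN vXp vYp kp kC] by blast
    have BN': "bivariate_normal M Y X"
      unfolding bivariate_normal_def
    proof (intro allI)
      fix a b
      have "(\<lambda>\<omega>. a * Y \<omega> + b * X \<omega>) = (\<lambda>\<omega>. b * X \<omega> + a * Y \<omega>)" by (simp add: add.commute)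
      then show "gaussian_rv M (\<lambda>\<omega>. a * Y \<omega> + b * X \<omega>)" using BN unfolding bivariate_normal_def by metis
    qed
    have cs: "covariance M Y X = covariance M X Y" unfolding covariance_def by (simp add: mult.commute)
    have kC': "(covariance M Y X)\<^sup>2 = (1 - k\<^sup>2) * covariance M Y Y * covariance M X X"
      using kC cs by (simp add: mult.commute mult.left_commute)
    obtain X' where X'm[measurable]: "X' \<in> borel_measurable M" and I2: "indep_var borel X' borel Y"
      and dX: "distr M borel X' = distr M borel X"
      and cX: "(\<integral>\<^sup>+ w. ennreal \<bar>X w - X' w\<bar> \<partial>M) = ennreal (sqrt (2 * covariance M X X * (1 - k)) * sqrt (2 / pi))"
      using residual[OF P Ym Xm BN' vYp vXp kp kC'] by blast
    have K1: "distr M borel (\<lambda>w. (X w, Y' w)) = distr M borel X \<Otimes>\<^sub>M distr M borel Y"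
      using I1 unfolding indep_var_distribution_eq by (simp add: dY borel_prod)
    have K2: "distr M borel (\<lambda>w. (X' w, Y w)) = distr M borel X \<Otimes>\<^sub>M distr M borel Y"
      using I2 unfolding indep_var_distribution_eq by (simp add: dX borel_prod)
    have "eCov M X Y \<le> (\<integral>\<^sup>+ w. ennreal (\<bar>X w - X w\<bar> + \<bar>Y w - Y' w\<bar>) \<partial>M)"
      by (rule coupling_bound[OF P Xm Ym Xm Y'm refl K1])
    then have 1: "eCov M X Y \<le> ennreal (sqrt (2 * covariance M Y Y * (1 - k)) * sqrt (2 / pi))" using cY by simp
    have "eCov M X Y \<le> (\<integral>\<^sup>+ w. ennreal (\<bar>X w - X' w\<bar> + \<bar>Y w - Y w\<bar>) \<partial>M)"
      by (rule coupling_bound[OF P Xm Ym X'm Ym refl K2])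
    then have 2: "eCov M X Y \<le> ennreal (sqrt (2 * covariance M X X * (1 - k)) * sqrt (2 / pi))" using cX by simp
    show ?thesis using 1 2 by simp
  qed
  then show "eCov M X Y \<le> ennreal (sqrt (2 * covariance M Y Y * (1 - k)) * sqrt (2 / pi))"
    and "eCov M X Y \<le> ennreal (sqrt (2 * covariance M X X * (1 - k)) * sqrt (2 / pi))" by auto
qed

theorem theorem4:
  fixes M :: "'w measure" and X Y :: "'w \<Rightarrow> real" and \<rho> :: real
  assumes "prob_space M"
    and "X \<in> borel_measurable M" and "Y \<in> borel_measurable M"
    and "bivariate_normal M X Y"
    and "covariance M X X > 0" and "covariance M Y Y > 0"
    and "\<rho> = pearson M X Y"
  shows "eCor M X Y \<le> sqrt (1 - sqrt (1 - \<rho>\<^sup>2))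
         \<and> sqrt (1 - sqrt (1 - \<rho>\<^sup>2)) \<le> \<bar>\<rho>\<bar>
         \<and> (\<rho> \<notin> {-1, 0, 1} \<longrightarrow> sqrt (1 - sqrt (1 - \<rho>\<^sup>2)) < \<bar>\<rho>\<bar>)"
proof -
  note P = assms(1) and Xm[measurable] = assms(2) and Ym[measurable] = assms(3) and BN = assms(4)
    and vXp = assms(5) and vYp = assms(6)
  interpret prob_space M by fact
  define vX where "vX = covariance M X X"
  define vY where "vY = covariance M Y Y"
  define C where "C = covariance M X Y"
  have vX0: "vX > 0" and vY0: "vY > 0" using vXp vYp by (simp_all add: vX_def vY_def)
  have GX: "gaussian_rv M X" using gl[OF P BN, of 1 0 0] by simp
  have GY: "gaussian_rv M Y" using gl[OF P BN, of 0 1 0] by simp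
  note gX = gauss_rv[OF P GX] and gY = gauss_rv[OF P GY]
  note CL = cov_lin[OF P gX(1) gY(1) gX(2) gY(2)]
  have rho2: "\<rho>\<^sup>2 = C\<^sup>2 / (vX * vY)"
    using assms(7) vX0 vY0 by (simp add: pearson_def C_def vX_def vY_def power_divide)
  have "0 \<le> covariance M (\<lambda>w. (- (C / vX)) * X w + 1 * Y w + 0) (\<lambda>w. (- (C / vX)) * X w + 1 * Y w + 0)"
    by (rule gauss_rv(6)[OF P gl[OF P BN]])
  also have "\<dots> = (- (C / vX))\<^sup>2 * vX + 2 * (- (C / vX)) * 1 * C + 1\<^sup>2 * vY"
    unfolding vX_def vY_def C_def by (rule CL(2))
  also have "\<dots> = vY - C\<^sup>2 / vX" using vX0 by (simp add: power2_eq_square field_simps)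
  finally have "C\<^sup>2 / vX \<le> vY" by simp
  then have "C\<^sup>2 \<le> vY * vX" using vX0 by (simp add: divide_le_eq)
  then have "C\<^sup>2 \<le> vX * vY" by (simp add: mult.commute)
  then have r1: "\<rho>\<^sup>2 \<le> 1" unfolding rho2 using vX0 vY0 by (simp add: divide_le_eq)
  define k where "k = sqrt (1 - \<rho>\<^sup>2)"
  have k0: "k \<ge> 0" and k1: "k \<le> 1" using r1 by (auto simp: k_def)
  have kk: "k\<^sup>2 = 1 - \<rho>\<^sup>2" using r1 by (simp add: k_def)
  have kC: "C\<^sup>2 = (1 - k\<^sup>2) * vX * vY" unfolding kk rho2 using vX0 vY0 by simp
  note U = ecov_upper[OF P Xm Ym BN vXp vYp k0 kC[unfolded C_def vX_def vY_def]]
  define D where "D = sqrt (2 / pi)"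
  have Dp: "D > 0" unfolding D_def by simp
  have DXv: "ennreal (sqrt (2 * vX) * D) \<le> eVar M X"
    using evar_lower[OF P Xm] dnorm[OF P gX(5)[OF vXp]] vX0 by (simp add: D_def vX_def)
  have DYv: "ennreal (sqrt (2 * vY) * D) \<le> eVar M Y"
    using evar_lower[OF P Ym] dnorm[OF P gY(5)[OF vYp]] vY0 by (simp add: D_def vY_def)
  have a0: "0 \<le> enn2real (eCov M X Y)" by simp
  have aY: "enn2real (eCov M X Y) \<le> sqrt (2 * vY) * D * sqrt (1 - k)"
  proof -
    have "enn2real (eCov M X Y) \<le> sqrt (2 * vY * (1 - k)) * D"
      using U(1) k1 vY0 by (intro enn_bound) (simp_all add: D_def vY_def)
    also have "sqrt (2 * vY * (1 - k)) * D = sqrt (2 * vY) * D * sqrt (1 - k)"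
      unfolding real_sqrt_mult[of "2 * vY" "1 - k"] by (simp only: mult_ac)
    finally show ?thesis .
  qed
  have aX: "enn2real (eCov M X Y) \<le> sqrt (2 * vX) * D * sqrt (1 - k)"
  proof -
    have "enn2real (eCov M X Y) \<le> sqrt (2 * vX * (1 - k)) * D"
      using U(2) k1 vX0 by (intro enn_bound) (simp_all add: D_def vX_def)
    also have "sqrt (2 * vX * (1 - k)) * D = sqrt (2 * vX) * D * sqrt (1 - k)"
      unfolding real_sqrt_mult[of "2 * vX" "1 - k"] by (simp only: mult_ac)
    finally show ?thesis .
  qed
  have "eCor M X Y \<le> sqrt (1 - k)"
    unfolding eCor_def
    by (rule final_arith[OF a0 aY aX enn_lower[OF DXv] enn_lower[OF DYv]]) (use vX0 vY0 Dp k1 in simp_all)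
  then show ?thesis using rho_arith[OF r1] unfolding k_def by blast
qed

end
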